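(* Let $X_\bullet$ be a right $k[\square_{\mathrm{inj}}]$-module. Then \[H_n(\tau(v^\ast X_\bullet))\cong H^\square_{n+1}(X_\bullet)\ (n\ge0),\qquad H^a_{-1}(v^\ast X_\bullet)\cong H^\square_0(X_\bullet).\] Consequently, a morphism $f$ of right $k[\square_{\mathrm{inj}}]$-modules lies in $W_{\square_{\mathrm{inj}}}$ if and only if $v^\ast f\in W_{\Delta_{a,\mathrm{inj}}}$, and $v^\ast$ induces a functor of Gabriel–Zisman localizations \[\mathrm{rmod}(k[\square_{\mathrm{inj}}])[W_{\square_{\mathrm{inj}}}^{-1}]\to\mathrm{rmod}(k[\Delta_{a,\mathrm{inj}}])[W_{\Delta_{a,\mathrm{inj}}}^{-1}]\simeq\mathbf{Ch}_{\ge-1}(k)[\text{quasi-isos}^{-1}].\]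
   Context: $k$ is a field; $k[\mathcal C]$ is the $k$-linearization of a small category; right modules over a $k$-linear category are $k$-linear functors from its opposite to $\mathrm{Vect}_k$; for a right module $X$ and $f\colon x\to y$, $X(f)\colon X(y)\to X(x)$. $\Delta_{a,\mathrm{inj}}$: objects $[n]=\{0<\dots<n\}$, $n\ge0$, and $[-1]=\varnothing$, injective order-preserving maps; $\delta^i\colon[n-1]\to[n]$ omits $i$. $\square_{\mathrm{inj}}$: objects $\square_n=\{0,1\}^n$, $n\ge0$, morphisms generated by cofaces $\delta_i^\varepsilon\colon\square_{n-1}\to\square_n$ ($\varepsilon\in\{0,1\}$, $1\le i\le n$) inserting $\varepsilon$ as $i$-th coordinate; write $X_n=X(\square_n)$. The cubical sign embedding $v\colon k[\Delta_{a,\mathrm{inj}}]\to k[\square_{\mathrm{inj}}]$ is the $k$-linear functor $[n]\mapsto\square_{n+1}$, $\delta^i\mapsto\delta^1_{i+1}-\delta^0_{i+1}$; $v^\ast$ is restriction. $H^\square_n(X)$ is the homology of the chain complex $\cdots\to X_1\to X_0$ with differential $\partial_n=X(\sum_{i=1}^n(-1)^{i-1}(\delta_i^1-\delta_i^0))$; $W_{\square_{\mathrm{inj}}}$ is the class of morphisms inducing isomorphisms on $H^\square_n$ for all $n\ge0$. For a right $k[\Delta_{a,\mathrm{inj}}]$-module $Y$, $C^a_\ast(Y)$ is $\cdots\to Y_0\xrightarrow{\partial^a_0}Y_{-1}$ with $\partial^a_n=Y(\sum_{i=0}^n(-1)^i\delta^i)$, $H^a_{-1}(Y)=\operatorname{coker}\partial^a_0$,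 and the good truncation $\tau(Y)$ has $\tau(Y)_n=Y_n$ for $n\ge1$, $\tau(Y)_0=\ker\partial^a_0$; $W_{\Delta_{a,\mathrm{inj}}}$ is the class of morphisms $g$ with $\tau(g)$ a quasi-isomorphism and $H^a_{-1}(g)$ an isomorphism. The final equivalence with $\mathbf{Ch}_{\ge-1}(k)$ is induced by $C^a_\ast$. $\mathcal C[W^{-1}]$ is Gabriel–Zisman localization. *)

theory Defs
  imports Complex_Main
begin

definition cycles :: "(int \<Rightarrow> 'v set) \<Rightarrow> (int \<Rightarrow> 'v \<Rightarrow> 'v::zero) \<Rightarrow> int \<Rightarrow> 'v set" where
  "cycles C D n = {x \<in> C n. D n x = 0}"

definition boundaries :: "(int \<Rightarrow> 'v set) \<Rightarrow> (int \<Rightarrow> 'v \<Rightarrow> 'v) \<Rightarrow> int \<Rightarrow> 'v set" where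
  "boundaries C D n = D (n + 1) ` C (n + 1)"

text \<open>Elements of the quotient Z/B, as cosets.\<close>
definition cosets :: "'v::plus set \<Rightarrow> 'v set \<Rightarrow> 'v set set" where
  "cosets Z B = (\<lambda>z. (+) z ` B) ` Z"

definition induced :: "('v \<Rightarrow> 'w::plus) \<Rightarrow> 'w set \<Rightarrow> 'v set \<Rightarrow> 'w set" where
  "induced g B2 c = (\<Union>x\<in>c. (+) (g x) ` B2)"

definition quotient_iso ::
  "('k \<Rightarrow> 'v \<Rightarrow> 'v::ab_group_add) \<Rightarrow> 'v set \<Rightarrow> 'v set \<Rightarrow>
   ('k \<Rightarrow> 'w \<Rightarrow> 'w::ab_group_add) \<Rightarrow> 'w set \<Rightarrow> 'w set \<Rightarrow> bool" where
  "quotient_iso sc1 Z1 B1 sc2 Z2 B2 \<longleftrightarrow>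
     (\<exists>g. (\<forall>x\<in>Z1. g x \<in> Z2) \<and> (\<forall>x\<in>Z1. \<forall>y\<in>Z1. g (x + y) = g x + g y)
        \<and> (\<forall>c. \<forall>x\<in>Z1. g (sc1 c x) = sc2 c (g x)) \<and> (\<forall>x\<in>B1. g x \<in> B2)
        \<and> bij_betw (induced g B2) (cosets Z1 B1) (cosets Z2 B2))"

definition homology_iso ::
  "('k \<Rightarrow> 'v \<Rightarrow> 'v::ab_group_add) \<Rightarrow> (int \<Rightarrow> 'v set) \<Rightarrow> (int \<Rightarrow> 'v \<Rightarrow> 'v) \<Rightarrow> int \<Rightarrow>
   ('k \<Rightarrow> 'w \<Rightarrow> 'w::ab_group_add) \<Rightarrow> (int \<Rightarrow> 'w set) \<Rightarrow> (int \<Rightarrow> 'w \<Rightarrow> 'w) \<Rightarrow> int \<Rightarrow> bool" where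
  "homology_iso sc1 C1 D1 n1 sc2 C2 D2 n2 \<longleftrightarrow>
     quotient_iso sc1 (cycles C1 D1 n1) (boundaries C1 D1 n1) sc2 (cycles C2 D2 n2) (boundaries C2 D2 n2)"

definition induces_homology_iso ::
  "('v \<Rightarrow> 'w) \<Rightarrow> (int \<Rightarrow> 'v set) \<Rightarrow> (int \<Rightarrow> 'v \<Rightarrow> 'v::ab_group_add) \<Rightarrow>
   (int \<Rightarrow> 'w set) \<Rightarrow> (int \<Rightarrow> 'w \<Rightarrow> 'w::ab_group_add) \<Rightarrow> int \<Rightarrow> bool" where
  "induces_homology_iso g C1 D1 C2 D2 n \<longleftrightarrow>
     bij_betw (induced g (boundaries C2 D2 n))
       (cosets (cycles C1 D1 n) (boundaries C1 D1 n)) (cosets (cycles C2 D2 n) (boundaries C2 D2 n))"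

text \<open>A right k[\<box>_inj]-module X is encoded by subspaces V n = X_n of an ambient k-vector space
  (scalar multiplication sc) together with the face maps d n i e = X(\<delta>_i^e) : X_n \<rightarrow> X_{n-1}
  (1 \<le> i \<le> n, e = True meaning \<epsilon> = 1), which are k-linear and satisfy the duals of the cubical
  identities \<delta>_j^\<eta> \<delta>_i^\<epsilon> = \<delta>_i^\<epsilon> \<delta>_{j-1}^\<eta> (i < j), which present \<box>_inj.\<close>
definition cube_module ::
  "('k::field \<Rightarrow> 'v::ab_group_add \<Rightarrow> 'v) \<Rightarrow> (nat \<Rightarrow> 'v set) \<Rightarrow> (nat \<Rightarrow> nat \<Rightarrow> bool \<Rightarrow> 'v \<Rightarrow> 'v) \<Rightarrow> bool" where
  "cube_module sc V d \<longleftrightarrow>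
     vector_space sc \<and> (\<forall>n. module.subspace sc (V n)) \<and>
     (\<forall>n i e. 1 \<le> i \<and> i \<le> Suc n \<longrightarrow>
        (\<forall>x\<in>V (Suc n). d (Suc n) i e x \<in> V n) \<and>
        (\<forall>x\<in>V (Suc n). \<forall>y\<in>V (Suc n). d (Suc n) i e (x + y) = d (Suc n) i e x + d (Suc n) i e y) \<and>
        (\<forall>c. \<forall>x\<in>V (Suc n). d (Suc n) i e (sc c x) = sc c (d (Suc n) i e x))) \<and>
     (\<forall>n i j e h. 1 \<le> i \<and> i < j \<and> j \<le> n + 2 \<longrightarrow>
        (\<forall>x\<in>V (n + 2). d (n + 1) i e (d (n + 2) j h x) = d (n + 1) (j - 1) h (d (n + 2) i e x)))"

definition cube_hom ::
  "('k::field \<Rightarrow> 'v::ab_group_add \<Rightarrow> 'v) \<Rightarrow> (nat \<Rightarrow> 'v set) \<Rightarrow> (nat \<Rightarrow> nat \<Rightarrow> bool \<Rightarrow> 'v \<Rightarrow> 'v) \<Rightarrow>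
   ('k \<Rightarrow> 'w::ab_group_add \<Rightarrow> 'w) \<Rightarrow> (nat \<Rightarrow> 'w set) \<Rightarrow> (nat \<Rightarrow> nat \<Rightarrow> bool \<Rightarrow> 'w \<Rightarrow> 'w) \<Rightarrow>
   (nat \<Rightarrow> 'v \<Rightarrow> 'w) \<Rightarrow> bool" where
  "cube_hom sc V d sc' V' d' f \<longleftrightarrow>
     (\<forall>n. (\<forall>x\<in>V n. f n x \<in> V' n) \<and> (\<forall>x\<in>V n. \<forall>y\<in>V n. f n (x + y) = f n x + f n y) \<and>
          (\<forall>c. \<forall>x\<in>V n. f n (sc c x) = sc' c (f n x))) \<and>
     (\<forall>n i e. 1 \<le> i \<and> i \<le> Suc n \<longrightarrow>
        (\<forall>x\<in>V (Suc n). f n (d (Suc n) i e x) = d' (Suc n) i e (f (Suc n) x)))"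

definition cube_bd :: "('k::field \<Rightarrow> 'v::ab_group_add \<Rightarrow> 'v) \<Rightarrow> (nat \<Rightarrow> nat \<Rightarrow> bool \<Rightarrow> 'v \<Rightarrow> 'v) \<Rightarrow> nat \<Rightarrow> 'v \<Rightarrow> 'v" where
  "cube_bd sc d n x = (\<Sum>i=1..n. sc ((-1) ^ (i - 1)) (d n i True x - d n i False x))"

definition cube_C :: "(nat \<Rightarrow> 'v::zero set) \<Rightarrow> int \<Rightarrow> 'v set" where
  "cube_C V n = (if n \<ge> 0 then V (nat n) else {0})"

definition cube_D :: "('k::field \<Rightarrow> 'v::ab_group_add \<Rightarrow> 'v) \<Rightarrow> (nat \<Rightarrow> nat \<Rightarrow> bool \<Rightarrow> 'v \<Rightarrow> 'v) \<Rightarrow> int \<Rightarrow> 'v \<Rightarrow> 'v" where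
  "cube_D sc d n = (if n \<ge> 1 then cube_bd sc d (nat n) else (\<lambda>_. 0))"

definition W_cube ::
  "('k::field \<Rightarrow> 'v::ab_group_add \<Rightarrow> 'v) \<Rightarrow> (nat \<Rightarrow> 'v set) \<Rightarrow> (nat \<Rightarrow> nat \<Rightarrow> bool \<Rightarrow> 'v \<Rightarrow> 'v) \<Rightarrow>
   ('k \<Rightarrow> 'w::ab_group_add \<Rightarrow> 'w) \<Rightarrow> (nat \<Rightarrow> 'w set) \<Rightarrow> (nat \<Rightarrow> nat \<Rightarrow> bool \<Rightarrow> 'w \<Rightarrow> 'w) \<Rightarrow>
   (nat \<Rightarrow> 'v \<Rightarrow> 'w) \<Rightarrow> bool" where
  "W_cube sc V d sc' V' d' f \<longleftrightarrow>
     (\<forall>n::int. n \<ge> 0 \<longrightarrow>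
        induces_homology_iso (f (nat n)) (cube_C V) (cube_D sc d) (cube_C V') (cube_D sc' d') n)"

text \<open>A right k[\<Delta>_{a,inj}]-module Y: subspaces Y n (n \<ge> -1) of an ambient k-vector space and
  face maps d n i = Y(\<delta>^i) : Y_n \<rightarrow> Y_{n-1} (n \<ge> 0, 0 \<le> i \<le> n), k-linear, satisfying
  the duals of \<delta>^j \<delta>^i = \<delta>^i \<delta>^{j-1} (i < j).\<close>
definition ss_module ::
  "('k::field \<Rightarrow> 'v::ab_group_add \<Rightarrow> 'v) \<Rightarrow> (int \<Rightarrow> 'v set) \<Rightarrow> (int \<Rightarrow> nat \<Rightarrow> 'v \<Rightarrow> 'v) \<Rightarrow> bool" where
  "ss_module sc Y d \<longleftrightarrow>
     vector_space sc \<and> (\<forall>n \<ge> -1. module.subspace sc (Y n)) \<and>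
     (\<forall>n i. n \<ge> 0 \<and> int i \<le> n \<longrightarrow>
        (\<forall>x\<in>Y n. d n i x \<in> Y (n - 1)) \<and>
        (\<forall>x\<in>Y n. \<forall>y\<in>Y n. d n i (x + y) = d n i x + d n i y) \<and>
        (\<forall>c. \<forall>x\<in>Y n. d n i (sc c x) = sc c (d n i x))) \<and>
     (\<forall>n i j. n \<ge> 0 \<and> i < j \<and> int j \<le> n + 1 \<longrightarrow>
        (\<forall>x\<in>Y (n + 1). d n i (d (n + 1) j x) = d n (j - 1) (d (n + 1) i x)))"

definition ss_bd :: "('k::field \<Rightarrow> 'v::ab_group_add \<Rightarrow> 'v) \<Rightarrow> (int \<Rightarrow> nat \<Rightarrow> 'v \<Rightarrow> 'v) \<Rightarrow> int \<Rightarrow> 'v \<Rightarrow> 'v" where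
  "ss_bd sc d n x = (\<Sum>i=0..nat n. sc ((-1) ^ i) (d n i x))"

definition ca_C :: "(int \<Rightarrow> 'v::zero set) \<Rightarrow> int \<Rightarrow> 'v set" where
  "ca_C Y n = (if n \<ge> -1 then Y n else {0})"

definition ca_D :: "('k::field \<Rightarrow> 'v::ab_group_add \<Rightarrow> 'v) \<Rightarrow> (int \<Rightarrow> nat \<Rightarrow> 'v \<Rightarrow> 'v) \<Rightarrow> int \<Rightarrow> 'v \<Rightarrow> 'v" where
  "ca_D sc d n = (if n \<ge> 0 then ss_bd sc d n else (\<lambda>_. 0))"

definition tau_C :: "('k::field \<Rightarrow> 'v::ab_group_add \<Rightarrow> 'v) \<Rightarrow> (int \<Rightarrow> 'v set) \<Rightarrow> (int \<Rightarrow> nat \<Rightarrow> 'v \<Rightarrow> 'v) \<Rightarrow> int \<Rightarrow> 'v set" where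
  "tau_C sc Y d n = (if n = 0 then {x \<in> Y 0. ss_bd sc d 0 x = 0} else if n \<ge> 1 then Y n else {0})"

definition tau_D :: "('k::field \<Rightarrow> 'v::ab_group_add \<Rightarrow> 'v) \<Rightarrow> (int \<Rightarrow> nat \<Rightarrow> 'v \<Rightarrow> 'v) \<Rightarrow> int \<Rightarrow> 'v \<Rightarrow> 'v" where
  "tau_D sc d n = (if n \<ge> 1 then ss_bd sc d n else (\<lambda>_. 0))"

definition W_Delta ::
  "('k::field \<Rightarrow> 'v::ab_group_add \<Rightarrow> 'v) \<Rightarrow> (int \<Rightarrow> 'v set) \<Rightarrow> (int \<Rightarrow> nat \<Rightarrow> 'v \<Rightarrow> 'v) \<Rightarrow>
   ('k \<Rightarrow> 'w::ab_group_add \<Rightarrow> 'w) \<Rightarrow> (int \<Rightarrow> 'w set) \<Rightarrow> (int \<Rightarrow> nat \<Rightarrow> 'w \<Rightarrow> 'w) \<Rightarrow>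
   (int \<Rightarrow> 'v \<Rightarrow> 'w) \<Rightarrow> bool" where
  "W_Delta sc Y d sc' Y' d' g \<longleftrightarrow>
     (\<forall>n::int. n \<ge> 0 \<longrightarrow>
        induces_homology_iso (g n) (tau_C sc Y d) (tau_D sc d) (tau_C sc' Y' d') (tau_D sc' d') n) \<and>
     induces_homology_iso (g (-1)) (ca_C Y) (ca_D sc d) (ca_C Y') (ca_D sc' d') (-1)"

text \<open>v[n] = \<box>_{n+1}, v(\<delta>^i) = \<delta>^1_{i+1} - \<delta>^0_{i+1}; hence (v^*X)_n = X_{n+1} and
  (v^*X)(\<delta>^i) = X(\<delta>^1_{i+1}) - X(\<delta>^0_{i+1}).\<close>
definition vstar_sp :: "(nat \<Rightarrow> 'v set) \<Rightarrow> int \<Rightarrow> 'v set" where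
  "vstar_sp V n = V (nat (n + 1))"

definition vstar_face :: "(nat \<Rightarrow> nat \<Rightarrow> bool \<Rightarrow> 'v \<Rightarrow> 'v::minus) \<Rightarrow> int \<Rightarrow> nat \<Rightarrow> 'v \<Rightarrow> 'v" where
  "vstar_face d n i x = d (nat (n + 1)) (Suc i) True x - d (nat (n + 1)) (Suc i) False x"

definition vstar_mor :: "(nat \<Rightarrow> 'v \<Rightarrow> 'w) \<Rightarrow> int \<Rightarrow> 'v \<Rightarrow> 'w" where
  "vstar_mor f n = f (nat (n + 1))"

end

theory Submission
  imports Defs
begin

lemma bd_eq:
  assumes "n \<ge> 0"
  shows "ss_bd sc (vstar_face d) n = cube_bd sc d (nat (n + 1))"
proof
  fix x
  have N: "nat (n + 1) = Suc (nat n)" using assms by simp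
  show "ss_bd sc (vstar_face d) n x = cube_bd sc d (nat (n + 1)) x"
    unfolding ss_bd_def cube_bd_def vstar_face_def N
    using sum.shift_bounds_cl_Suc_ivl[of "\<lambda>i. sc ((-1) ^ (i - 1))
          (d (Suc (nat n)) i True x - d (Suc (nat n)) i False x)" 0 "nat n"] by simp
qed

lemma tau_cycles:
  assumes "n \<ge> 0"
  shows "cycles (tau_C sc (vstar_sp V) (vstar_face d)) (tau_D sc (vstar_face d)) n
       = cycles (cube_C V) (cube_D sc d) (n + 1)"
proof (cases "n = 0")
  case True
  then show ?thesis
    unfolding cycles_def tau_C_def tau_D_def cube_C_def cube_D_def vstar_sp_def
    using bd_eq[of 0 sc d] by auto
next
  case False
  then have "n \<ge> 1" using assms by simp
  then show ?thesis
    unfolding cycles_def tau_C_def tau_D_def cube_C_def cube_D_def vstar_sp_def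
    using bd_eq[of n sc d] by auto
qed

lemma tau_bounds:
  assumes "n \<ge> 0"
  shows "boundaries (tau_C sc (vstar_sp V) (vstar_face d)) (tau_D sc (vstar_face d)) n
       = boundaries (cube_C V) (cube_D sc d) (n + 1)"
  unfolding boundaries_def tau_C_def tau_D_def cube_C_def cube_D_def vstar_sp_def
  using assms bd_eq[of "n+1" sc d] by auto

lemma ca_cycles:
  "cycles (ca_C (vstar_sp V)) (ca_D sc (vstar_face d)) (-1)
       = cycles (cube_C V) (cube_D sc d) 0"
  unfolding cycles_def ca_C_def ca_D_def cube_C_def cube_D_def vstar_sp_def by auto

lemma ca_bounds:
  "boundaries (ca_C (vstar_sp V)) (ca_D sc (vstar_face d)) (-1)
       = boundaries (cube_C V) (cube_D sc d) 0"
  unfolding boundaries_def ca_C_def ca_D_def cube_C_def cube_D_def vstar_sp_def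
  using bd_eq[of 0 sc d] by auto

lemma add_diff_add:
  fixes a b c e :: "'a::ab_group_add"
  shows "(a + b) - (c + e) = (a - c) + (b - e)" by (simp add: algebra_simps)

lemma bd_add:
  assumes X: "cube_module sc V d" and m: "m \<ge> 1" and x: "x \<in> V m" and y: "y \<in> V m"
  shows "cube_bd sc d m (x + y) = cube_bd sc d m x + cube_bd sc d m y"
proof -
  obtain k where k: "m = Suc k" using m by (cases m) auto
  have vs: "vector_space sc" using X unfolding cube_module_def by blast
  then interpret vector_space sc .
  have add: "\<And>i e. i \<in> {1..m} \<Longrightarrow> d m i e (x + y) = d m i e x + d m i e y"
  proof -
    fix i e assume i: "i \<in> {1..m}"
    have "\<forall>n i e. 1 \<le> i \<and> i \<le> Suc n \<longrightarrow>
        (\<forall>x\<in>V (Suc n). \<forall>y\<in>V (Suc n). d (Suc n) i e (x + y) = d (Suc n) i e x + d (Suc n) i e y)"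
      using X unfolding cube_module_def by blast
    then show "d m i e (x + y) = d m i e x + d m i e y" using i x y k by simp
  qed
  have "cube_bd sc d m (x + y) = (\<Sum>i=1..m. sc ((-1) ^ (i - 1)) (d m i True x - d m i False x)
        + sc ((-1) ^ (i - 1)) (d m i True y - d m i False y))"
    unfolding cube_bd_def
  proof (rule sum.cong[OF refl])
    fix i assume i: "i \<in> {1..m}"
    show "sc ((-1) ^ (i - 1)) (d m i True (x + y) - d m i False (x + y)) =
        sc ((-1) ^ (i - 1)) (d m i True x - d m i False x)
        + sc ((-1) ^ (i - 1)) (d m i True y - d m i False y)"
      unfolding add[OF i] scale_right_distrib[symmetric] add_diff_add by (rule refl)
  qed
  then show ?thesis unfolding cube_bd_def by (simp add: sum.distrib)
qed

lemma bounds_props: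
  assumes X: "cube_module sc V d" and n: "n \<ge> 0"
  shows "0 \<in> boundaries (cube_C V) (cube_D sc d) n"
    and "\<And>a b. a \<in> boundaries (cube_C V) (cube_D sc d) n \<Longrightarrow>
           b \<in> boundaries (cube_C V) (cube_D sc d) n \<Longrightarrow>
           a + b \<in> boundaries (cube_C V) (cube_D sc d) n"
proof -
  define m where "m = nat (n + 1)"
  have m: "m \<ge> 1" using n m_def by simp
  have B: "boundaries (cube_C V) (cube_D sc d) n = cube_bd sc d m ` V m"
    unfolding boundaries_def cube_C_def cube_D_def m_def using n by simp
  have vs: "vector_space sc" using X unfolding cube_module_def by (rule conjunct1)
  have sub: "module.subspace sc (V m)"
    using conjunct1[OF conjunct2[OF X[unfolded cube_module_def]]] by (rule spec)
  interpret vector_space sc by (rule vs)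
  have z: "0 \<in> V m" using sub unfolding subspace_def by blast
  have cl: "\<And>x y. x \<in> V m \<Longrightarrow> y \<in> V m \<Longrightarrow> x + y \<in> V m"
    using sub unfolding subspace_def by blast
  have "cube_bd sc d m (0 + 0) = cube_bd sc d m 0 + cube_bd sc d m 0"
    by (rule bd_add[OF X m z z])
  then have "cube_bd sc d m 0 = 0" by simp
  then have "0 = cube_bd sc d m 0" by simp
  then show "0 \<in> boundaries (cube_C V) (cube_D sc d) n" unfolding B using z by (rule image_eqI)
  fix a b assume "a \<in> boundaries (cube_C V) (cube_D sc d) n"
    "b \<in> boundaries (cube_C V) (cube_D sc d) n"
  then obtain x y where xy: "x \<in> V m" "y \<in> V m" "a = cube_bd sc d m x" "b = cube_bd sc d m y"
    unfolding B by blast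
  have "a + b = cube_bd sc d m (x + y)" using bd_add[OF X m xy(1) xy(2)] xy(3,4) by simp
  then show "a + b \<in> boundaries (cube_C V) (cube_D sc d) n"
    unfolding B using cl[OF xy(1) xy(2)] by (rule image_eqI)
qed

lemma induced_id:
  assumes z: "0 \<in> B" and cl: "\<And>a b. a \<in> B \<Longrightarrow> b \<in> B \<Longrightarrow> a + b \<in> B"
    and c: "c \<in> cosets Z B"
  shows "induced id B c = (c :: 'v::ab_group_add set)"
proof -
  obtain w where w: "c = (+) w ` B" using c unfolding cosets_def by auto
  show ?thesis unfolding induced_def w
  proof (intro equalityI subsetI)
    fix t assume "t \<in> (\<Union>x\<in>(+) w ` B. (+) (id x) ` B)"
    then obtain a b where "a \<in> B" "b \<in> B" "t = w + a + b" by auto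
    then show "t \<in> (+) w ` B" using cl by (metis add.assoc image_eqI)
  next
    fix t assume "t \<in> (+) w ` B"
    then obtain a where "a \<in> B" "t = w + a" by auto
    then show "t \<in> (\<Union>x\<in>(+) w ` B. (+) (id x) ` B)" using z
    proof -
      have "t = id (w + a) + 0" using \<open>t = w + a\<close> by simp
      then have "t \<in> (+) (id (w + a)) ` B" using z by blast
      moreover have "w + a \<in> (+) w ` B" using \<open>a \<in> B\<close> by blast
      ultimately show ?thesis by blast
    qed
  qed
qed

lemma qiso_refl:
  assumes z: "0 \<in> B" and cl: "\<And>a b. a \<in> B \<Longrightarrow> b \<in> B \<Longrightarrow> a + b \<in> B"
  shows "quotient_iso sc (Z :: 'v::ab_group_add set) B sc Z B"
  unfolding quotient_iso_def
proof (intro exI[of _ id] conjI)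
  show "bij_betw (induced id B) (cosets Z B) (cosets Z B)"
    using induced_id[OF z cl] bij_betw_id[of "cosets Z B"] bij_betw_cong[of "cosets Z B" "induced id B" id "cosets Z B"]
    by simp
qed auto

theorem proposition4p5:
  fixes sc :: "'k::field \<Rightarrow> 'v::ab_group_add \<Rightarrow> 'v"
    and V :: "nat \<Rightarrow> 'v set"
    and d :: "nat \<Rightarrow> nat \<Rightarrow> bool \<Rightarrow> 'v \<Rightarrow> 'v"
  assumes X: "cube_module sc V d"
  shows "(\<forall>n::int. n \<ge> 0 \<longrightarrow>
            homology_iso sc (tau_C sc (vstar_sp V) (vstar_face d)) (tau_D sc (vstar_face d)) n
                         sc (cube_C V) (cube_D sc d) (n + 1))
       \<and> homology_iso sc (ca_C (vstar_sp V)) (ca_D sc (vstar_face d)) (-1)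
                        sc (cube_C V) (cube_D sc d) 0
       \<and> (\<forall>(sc' :: 'k \<Rightarrow> 'w::ab_group_add \<Rightarrow> 'w) V' d' f.
            cube_module sc' V' d' \<and> cube_hom sc V d sc' V' d' f \<longrightarrow>
            (W_cube sc V d sc' V' d' f \<longleftrightarrow>
             W_Delta sc (vstar_sp V) (vstar_face d) sc' (vstar_sp V') (vstar_face d') (vstar_mor f)))"
proof (intro conjI allI impI)
  fix n :: int assume n: "n \<ge> 0"
  show "homology_iso sc (tau_C sc (vstar_sp V) (vstar_face d)) (tau_D sc (vstar_face d)) n
                         sc (cube_C V) (cube_D sc d) (n + 1)"
  proof -
    have n1: "n + 1 \<ge> 0" using n by simp
    show ?thesis unfolding homology_iso_def tau_cycles[OF n] tau_bounds[OF n]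
      by (rule qiso_refl[OF bounds_props(1)[OF X n1] bounds_props(2)[OF X n1]])
  qed
next
  show "homology_iso sc (ca_C (vstar_sp V)) (ca_D sc (vstar_face d)) (-1)
                        sc (cube_C V) (cube_D sc d) 0"
  proof -
    have n0: "(0::int) \<ge> 0" by simp
    show ?thesis unfolding homology_iso_def ca_cycles ca_bounds
      by (rule qiso_refl[OF bounds_props(1)[OF X n0] bounds_props(2)[OF X n0]])
  qed
next
  fix sc' :: "'k \<Rightarrow> 'w::ab_group_add \<Rightarrow> 'w" and V' d' f
  have A: "W_cube sc V d sc' V' d' f \<longleftrightarrow>
    (\<forall>n::int. n \<ge> 0 \<longrightarrow> induces_homology_iso (f (nat (n + 1))) (cube_C V) (cube_D sc d)
        (cube_C V') (cube_D sc' d') (n + 1)) \<and>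
    induces_homology_iso (f 0) (cube_C V) (cube_D sc d) (cube_C V') (cube_D sc' d') 0"
  proof -
    let ?P = "\<lambda>n::int. induces_homology_iso (f (nat n)) (cube_C V) (cube_D sc d) (cube_C V') (cube_D sc' d') n"
    have W: "W_cube sc V d sc' V' d' f = (\<forall>n::int. n \<ge> 0 \<longrightarrow> ?P n)"
      unfolding W_cube_def ..
    have Q: "(\<forall>n::int. n \<ge> 0 \<longrightarrow> P n) = ((\<forall>n::int. n \<ge> 0 \<longrightarrow> P (n + 1)) \<and> P 0)" for P
    proof (intro iffI conjI allI impI)
      fix n :: int assume "\<forall>n::int. n \<ge> 0 \<longrightarrow> P n" "n \<ge> 0"
      then show "P (n + 1)" by simp
    next
      assume "\<forall>n::int. n \<ge> 0 \<longrightarrow> P n" then show "P 0" by simp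
    next
      fix n :: int assume H: "(\<forall>n::int. n \<ge> 0 \<longrightarrow> P (n + 1)) \<and> P 0" and n: "n \<ge> 0"
      show "P n"
      proof (cases "n = 0")
        case True then show ?thesis using H by simp
      next
        case False
        then have "n - 1 \<ge> 0" using n by simp
        then have "P (n - 1 + 1)" using H by blast
        then show ?thesis by simp
      qed
    qed
    have N0: "nat 0 = 0" by simp
    have N1: "\<And>n::int. n \<ge> 0 \<Longrightarrow> nat (n + 1) = nat (n + 1)" by simp
    have Q2: "(\<forall>n::int. n \<ge> 0 \<longrightarrow> ?P n) = ((\<forall>n::int. n \<ge> 0 \<longrightarrow> ?P (n + 1)) \<and> ?P 0)"
      by (rule Q)
    show ?thesis unfolding W Q2 N0 by (rule refl)
  qed
  have B: "W_Delta sc (vstar_sp V) (vstar_face d) sc' (vstar_sp V') (vstar_face d') (vstar_mor f)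
    \<longleftrightarrow>
    (\<forall>n::int. n \<ge> 0 \<longrightarrow> induces_homology_iso (f (nat (n + 1))) (cube_C V) (cube_D sc d)
        (cube_C V') (cube_D sc' d') (n + 1)) \<and>
    induces_homology_iso (f 0) (cube_C V) (cube_D sc d) (cube_C V') (cube_D sc' d') 0"
  proof -
    have T: "\<And>n::int. n \<ge> 0 \<Longrightarrow>
      induces_homology_iso (vstar_mor f n) (tau_C sc (vstar_sp V) (vstar_face d)) (tau_D sc (vstar_face d))
         (tau_C sc' (vstar_sp V') (vstar_face d')) (tau_D sc' (vstar_face d')) n
      = induces_homology_iso (f (nat (n + 1))) (cube_C V) (cube_D sc d)
        (cube_C V') (cube_D sc' d') (n + 1)"
    proof -
      fix n :: int assume n: "n \<ge> 0"
      show "?thesis n" unfolding induces_homology_iso_def vstar_mor_def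
        tau_cycles[OF n] tau_bounds[OF n] ..
    qed
    have C: "induces_homology_iso (vstar_mor f (-1)) (ca_C (vstar_sp V)) (ca_D sc (vstar_face d))
        (ca_C (vstar_sp V')) (ca_D sc' (vstar_face d')) (-1)
      = induces_homology_iso (f 0) (cube_C V) (cube_D sc d) (cube_C V') (cube_D sc' d') 0"
      unfolding induces_homology_iso_def vstar_mor_def ca_cycles ca_bounds by simp
    have E: "(\<forall>n::int. n \<ge> 0 \<longrightarrow> P n) = (\<forall>n::int. n \<ge> 0 \<longrightarrow> Q n)"
      if "\<And>n. n \<ge> 0 \<Longrightarrow> P n = Q n" for P Q using that by auto
    have E2: "(\<forall>n::int. n \<ge> 0 \<longrightarrow> induces_homology_iso (vstar_mor f n) (tau_C sc (vstar_sp V) (vstar_face d)) (tau_D sc (vstar_face d))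
         (tau_C sc' (vstar_sp V') (vstar_face d')) (tau_D sc' (vstar_face d')) n)
      = (\<forall>n::int. n \<ge> 0 \<longrightarrow> induces_homology_iso (f (nat (n + 1))) (cube_C V) (cube_D sc d)
        (cube_C V') (cube_D sc' d') (n + 1))"
      by (rule E) (rule T)
    show ?thesis unfolding W_Delta_def C E2 ..
  qed
  show "W_cube sc V d sc' V' d' f \<longleftrightarrow>
    W_Delta sc (vstar_sp V) (vstar_face d) sc' (vstar_sp V') (vstar_face d') (vstar_mor f)"
    unfolding A B ..
qed

end
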